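(* Let $p\ge1$, $l\in\mathbb{Z}_{\ge0}$, and $s_1,\dots,s_p\in\mathbb{C}$ with $|s_i|<1$ or $s_i=1$ for every $1\le i\le p$. Then for every $\varepsilon>0$, $(\Delta^l\mathtt{s}^{\mathrm{sh}}_{(1,\dots,1;s_1,\dots,s_p)})(m)=O\bigl(m^{-(l+1-\varepsilon)}\bigr)$ as $m\to\infty$.
   Context: Convention $0^0=1$. $\mathtt{s}^{\mathrm{sh}}_{(1,\dots,1;s_1,\dots,s_p)}(m)=\sum_{m=m_1\ge\cdots\ge m_p\ge0}\frac{s_1^{m_1-m_2}\cdots s_{p-1}^{m_{p-1}-m_p}s_p^{m_p+1}}{(m_1+1)\cdots(m_p+1)}$; $(\Delta a)(m)=a(m)-a(m+1)$. *)

theory Defs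
  imports Complex_Main "HOL-Library.Landau_Symbols"
begin

text \<open>Index tuples m = m_1 \<ge> m_2 \<ge> ... \<ge> m_p \<ge> 0, encoded as functions
  nat \<Rightarrow> nat that vanish outside {1..p}.\<close>
definition sh_index_set :: "nat \<Rightarrow> nat \<Rightarrow> (nat \<Rightarrow> nat) set" where
  "sh_index_set p m = {mm. mm 1 = m \<and> (\<forall>i\<in>{1..<p}. mm (Suc i) \<le> mm i)
      \<and> (\<forall>i. i \<notin> {1..p} \<longrightarrow> mm i = 0)}"

text \<open>s^sh_{(1,...,1; s_1,...,s_p)}(m); the parameters s_i are s 1, ..., s p.
  Isabelle's power satisfies 0^0 = 1.\<close>
definition ssh :: "nat \<Rightarrow> (nat \<Rightarrow> complex) \<Rightarrow> nat \<Rightarrow> complex" where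
  "ssh p s m = (\<Sum>mm\<in>sh_index_set p m.
      (\<Prod>i\<in>{1..<p}. s i ^ (mm i - mm (Suc i))) * s p ^ (mm p + 1)
        / (\<Prod>i\<in>{1..p}. of_nat (mm i + 1)))"

definition fwd_diff :: "(nat \<Rightarrow> complex) \<Rightarrow> nat \<Rightarrow> complex" where
  "fwd_diff a m = a m - a (Suc m)"

end

theory Submission
  imports Defs
begin

lemma ratio_aux:
  fixes r c :: real assumes r: "0 < r" "r < 1" and c: "c \<ge> 0"
  shows "summable (\<lambda>d::nat. r^d * (real d + 1) powr c)"
proof -
  define q where "q = (1 + r) / 2"
  define L where "L = ln (q / r)"
  have q: "r < q" "q < 1" using r by (auto simp: q_def)
  have L: "L > 0" using q r by (auto simp: L_def)
  define N where "N = nat \<lceil>c / L\<rceil>"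
  show ?thesis
  proof (rule summable_ratio_test[of q N])
    show "q < 1" by fact
    fix n assume n: "n \<ge> N"
    have "c / L \<le> real N" unfolding N_def by linarith
    also have "\<dots> \<le> real n + 1" using n by simp
    finally have cl: "c / (real n + 1) \<le> L" using L
      by (simp add: field_simps)
    have "(real n + 2) / (real n + 1) = 1 + 1 / (real n + 1)" by (simp add: field_simps)
    have "((real n + 2) / (real n + 1)) powr c = exp (c * ln (1 + 1 / (real n + 1)))"
      by (simp add: powr_def field_simps)
    also have "\<dots> \<le> exp (c * (1 / (real n + 1)))"
      using c by (intro exp_le_cancel_iff[THEN iffD2] mult_left_mono ln_add_one_self_le_self) auto
    also have "\<dots> \<le> exp L" using cl by simp
    also have "\<dots> = q / r" using q r by (simp add: L_def)
    finally have rat: "((real n + 2) / (real n + 1)) powr c \<le> q / r" .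
    have "norm (r ^ Suc n * (real (Suc n) + 1) powr c) = r * r^n * (real n + 2) powr c"
      using r by (simp add: add.commute)
    also have "(real n + 2) powr c = ((real n + 2) / (real n + 1)) powr c * (real n + 1) powr c"
      by (simp add: powr_divide)
    also have "r * r^n * (((real n + 2) / (real n + 1)) powr c * (real n + 1) powr c)
       \<le> r * r^n * (q / r * (real n + 1) powr c)"
      using rat r by (intro mult_left_mono mult_right_mono) auto
    also have "\<dots> = q * norm (r ^ n * (real n + 1) powr c)" using r by simp
    finally show "norm (r ^ Suc n * (real (Suc n) + 1) powr c) \<le> q * norm (r ^ n * (real n + 1) powr c)" .
  qed
qed

lemma summable_aux:
  fixes r c :: real assumes r: "0 \<le> r" "r < 1" and c: "c \<ge> 0"
  shows "summable (\<lambda>d::nat. r^d * (real d + 1) powr c)"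
proof -
  define r' where "r' = max r (1/2)"
  have "summable (\<lambda>d::nat. r'^d * (real d + 1) powr c)"
    using r by (intro ratio_aux c) (auto simp: r'_def)
  then show ?thesis
    by (rule summable_comparison_test[rotated])
      (use r in \<open>auto intro!: exI[of _ 0] mult_right_mono power_mono simp: r'_def\<close>)
qed

lemma geom_bound:
  fixes r c :: real assumes r: "0 \<le> r" "r < 1"
  shows "\<exists>B. \<forall>m::nat. r^m * (real m + 1) powr c \<le> B"
proof -
  have s: "summable (\<lambda>d::nat. r^d * (real d + 1) powr \<bar>c\<bar>)"
    using r by (intro summable_aux) auto
  show ?thesis
  proof (intro exI allI)
    fix m :: nat
    have "r^m * (real m + 1) powr c \<le> r^m * (real m + 1) powr \<bar>c\<bar>"
      using r by (intro mult_left_mono powr_mono) auto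
    also have "\<dots> = (\<Sum>d\<in>{m}. r^d * (real d + 1) powr \<bar>c\<bar>)" by simp
    also have "\<dots> \<le> (\<Sum>d. r^d * (real d + 1) powr \<bar>c\<bar>)"
      using r by (intro sum_le_suminf s) auto
    finally show "r^m * (real m + 1) powr c \<le> (\<Sum>d. r^d * (real d + 1) powr \<bar>c\<bar>)" .
  qed
qed

definition Cls :: "real \<Rightarrow> (nat \<Rightarrow> complex) \<Rightarrow> bool" where
  "Cls \<alpha> a \<longleftrightarrow> (\<forall>j. \<forall>e>0. \<exists>K. \<forall>m. norm ((fwd_diff ^^ j) a m) \<le> K * (real m + 1) powr (e - (real j + \<alpha>)))"

lemma fd_Suc: "(fwd_diff ^^ Suc j) a = (fwd_diff ^^ j) (fwd_diff a)"
  by (simp add: funpow_Suc_right del: funpow.simps)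

lemma fd_add: "(fwd_diff ^^ j) (\<lambda>m. a m + b m) = (\<lambda>m. (fwd_diff ^^ j) a m + (fwd_diff ^^ j) b m)"
  by (induction j) (auto simp: fwd_diff_def fun_eq_iff)

lemma fd_cmul: "(fwd_diff ^^ j) (\<lambda>m. c * a m) = (\<lambda>m. c * (fwd_diff ^^ j) a m)"
  by (induction j) (auto simp: fwd_diff_def fun_eq_iff algebra_simps)

lemma fd_shift: "(fwd_diff ^^ j) (\<lambda>m. a (Suc m)) = (\<lambda>m. (fwd_diff ^^ j) a (Suc m))"
  by (induction j) (auto simp: fwd_diff_def fun_eq_iff)

lemma fd_geom: "(fwd_diff ^^ j) (\<lambda>m. s ^ m) = (\<lambda>m. (1 - s) ^ j * s ^ m)"
  by (induction j) (auto simp: fwd_diff_def fun_eq_iff algebra_simps)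

lemma shift_pow: "(real (Suc m) + 1) powr g \<le> max 1 (2 powr g) * (real m + 1) powr g"
proof (cases "g \<ge> 0")
  case True
  have "(real (Suc m) + 1) powr g \<le> (2 * (real m + 1)) powr g"
    using True by (intro powr_mono2) auto
  also have "\<dots> = 2 powr g * (real m + 1) powr g" by (rule powr_mult)
  also have "\<dots> \<le> max 1 (2 powr g) * (real m + 1) powr g" by (intro mult_right_mono) auto
  finally show ?thesis .
next
  case False
  have "(real (Suc m) + 1) powr g \<le> (real m + 1) powr g"
    using False by (intro powr_mono2') auto
  also have "\<dots> \<le> max 1 (2 powr g) * (real m + 1) powr g"
    using mult_right_mono[of 1 "max 1 (2 powr g)" "(real m + 1) powr g"] by simp
  finally show ?thesis .
qed

lemma K_nonneg: "\<forall>m. norm (f m) \<le> K * (real m + 1) powr g \<Longrightarrow> 0 \<le> (K::real)"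
  by (drule spec[of _ 0]) (auto intro: order_trans[OF norm_ge_zero])

lemma ClsI: "(\<And>j e. e > 0 \<Longrightarrow> \<exists>K. \<forall>m. norm ((fwd_diff ^^ j) a m) \<le> K * (real m + 1) powr (e - (real j + \<alpha>))) \<Longrightarrow> Cls \<alpha> a"
  by (auto simp: Cls_def)

lemma ClsD: "Cls \<alpha> a \<Longrightarrow> e > 0 \<Longrightarrow> \<exists>K. \<forall>m. norm ((fwd_diff ^^ j) a m) \<le> K * (real m + 1) powr (e - (real j + \<alpha>))"
  by (auto simp: Cls_def)

lemma C_shift: assumes "Cls \<alpha> a" shows "Cls \<alpha> (\<lambda>m. a (Suc m))"
proof (rule ClsI)
  fix j e :: real
  fix j :: nat and e :: real assume e: "e > 0"
  obtain K where K: "\<forall>m. norm ((fwd_diff ^^ j) a m) \<le> K * (real m + 1) powr (e - (real j + \<alpha>))"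
    using ClsD[OF assms e] by blast
  have K0: "K \<ge> 0" using K_nonneg[OF K] .
  show "\<exists>K. \<forall>m. norm ((fwd_diff ^^ j) (\<lambda>m. a (Suc m)) m) \<le> K * (real m + 1) powr (e - (real j + \<alpha>))"
  proof (intro exI allI)
    fix m
    have "norm ((fwd_diff ^^ j) (\<lambda>m. a (Suc m)) m) = norm ((fwd_diff ^^ j) a (Suc m))"
      by (simp add: fd_shift)
    also have "\<dots> \<le> K * (real (Suc m) + 1) powr (e - (real j + \<alpha>))" using K by blast
    also have "\<dots> \<le> K * (max 1 (2 powr (e - (real j + \<alpha>))) * (real m + 1) powr (e - (real j + \<alpha>)))"
      using K0 by (intro mult_left_mono shift_pow) auto
    finally show "norm ((fwd_diff ^^ j) (\<lambda>m. a (Suc m)) m) \<le> (K * max 1 (2 powr (e - (real j + \<alpha>)))) * (real m + 1) powr (e - (real j + \<alpha>))"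
      by (simp add: mult.assoc)
  qed
qed

lemma C_diff: assumes "Cls \<alpha> a" shows "Cls (\<alpha> + 1) (fwd_diff a)"
proof (rule ClsI)
  fix j :: nat and e :: real assume e: "e > 0"
  obtain K where K: "\<forall>m. norm ((fwd_diff ^^ Suc j) a m) \<le> K * (real m + 1) powr (e - (real (Suc j) + \<alpha>))"
    using ClsD[OF assms e] by blast
  have "\<forall>m. norm ((fwd_diff ^^ j) (fwd_diff a) m) \<le> K * (real m + 1) powr (e - (real j + (\<alpha> + 1)))"
    using K unfolding fd_Suc by (simp add: algebra_simps del: funpow.simps)
  then show "\<exists>K. \<forall>m. norm ((fwd_diff ^^ j) (fwd_diff a) m) \<le> K * (real m + 1) powr (e - (real j + (\<alpha> + 1)))"
    by blast
qed

lemma C_mono: assumes "Cls \<alpha> a" "\<beta> \<le> \<alpha>" shows "Cls \<beta> a"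
proof (rule ClsI)
  fix j :: nat and e :: real assume e: "e > 0"
  obtain K where K: "\<forall>m. norm ((fwd_diff ^^ j) a m) \<le> K * (real m + 1) powr (e - (real j + \<alpha>))"
    using ClsD[OF assms(1) e] by blast
  have K0: "K \<ge> 0" using K_nonneg[OF K] .
  show "\<exists>K. \<forall>m. norm ((fwd_diff ^^ j) a m) \<le> K * (real m + 1) powr (e - (real j + \<beta>))"
  proof (intro exI allI)
    fix m
    show "norm ((fwd_diff ^^ j) a m) \<le> K * (real m + 1) powr (e - (real j + \<beta>))"
      using K[rule_format, of m] K0 assms(2)
      by (smt (verit) mult_left_mono powr_mono of_nat_0_le_iff)
  qed
qed

lemma C_add: assumes "Cls \<alpha> a" "Cls \<alpha> b" shows "Cls \<alpha> (\<lambda>m. a m + b m)"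
proof (rule ClsI)
  fix j :: nat and e :: real assume e: "e > 0"
  obtain K1 where K1: "\<forall>m. norm ((fwd_diff ^^ j) a m) \<le> K1 * (real m + 1) powr (e - (real j + \<alpha>))"
    using ClsD[OF assms(1) e] by blast
  obtain K2 where K2: "\<forall>m. norm ((fwd_diff ^^ j) b m) \<le> K2 * (real m + 1) powr (e - (real j + \<alpha>))"
    using ClsD[OF assms(2) e] by blast
  show "\<exists>K. \<forall>m. norm ((fwd_diff ^^ j) (\<lambda>m. a m + b m) m) \<le> K * (real m + 1) powr (e - (real j + \<alpha>))"
  proof (intro exI allI)
    fix m
    show "norm ((fwd_diff ^^ j) (\<lambda>m. a m + b m) m) \<le> (K1 + K2) * (real m + 1) powr (e - (real j + \<alpha>))"
      unfolding fd_add using K1[rule_format, of m] K2[rule_format, of m]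
      by (smt (verit) norm_triangle_ineq distrib_right)
  qed
qed

lemma C_cmul: assumes "Cls \<alpha> a" shows "Cls \<alpha> (\<lambda>m. c * a m)"
proof (rule ClsI)
  fix j :: nat and e :: real assume e: "e > 0"
  obtain K where K: "\<forall>m. norm ((fwd_diff ^^ j) a m) \<le> K * (real m + 1) powr (e - (real j + \<alpha>))"
    using ClsD[OF assms(1) e] by blast
  show "\<exists>K. \<forall>m. norm ((fwd_diff ^^ j) (\<lambda>m. c * a m) m) \<le> K * (real m + 1) powr (e - (real j + \<alpha>))"
  proof (intro exI allI)
    fix m
    show "norm ((fwd_diff ^^ j) (\<lambda>m. c * a m) m) \<le> (norm c * K) * (real m + 1) powr (e - (real j + \<alpha>))"
      unfolding fd_cmul norm_mult mult.assoc using K[rule_format, of m]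
      by (intro mult_left_mono) auto
  qed
qed

lemma mult_aux:
  "\<forall>a b \<alpha> \<beta> e. Cls \<alpha> a \<longrightarrow> Cls \<beta> b \<longrightarrow> e > 0 \<longrightarrow>
     (\<exists>K. \<forall>m. norm ((fwd_diff ^^ j) (\<lambda>m. a m * b m) m) \<le> K * (real m + 1) powr (e - (real j + (\<alpha> + \<beta>))))"
proof (induction j)
  case 0
  show ?case
  proof (intro allI impI)
    fix a b :: "nat \<Rightarrow> complex" and \<alpha> \<beta> e :: real
    assume A: "Cls \<alpha> a" "Cls \<beta> b" "e > 0"
    have half: "e/2 > 0" using A(3) by simp
    obtain K1 where K1: "\<forall>m. norm (a m) \<le> K1 * (real m + 1) powr (e/2 - \<alpha>)"
      using ClsD[OF A(1) half, where j=0] by auto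
    obtain K2 where K2: "\<forall>m. norm (b m) \<le> K2 * (real m + 1) powr (e/2 - \<beta>)"
      using ClsD[OF A(2) half, where j=0] by auto
    have K10: "K1 \<ge> 0" using K_nonneg[OF K1] .
    show "\<exists>K. \<forall>m. norm ((fwd_diff ^^ 0) (\<lambda>m. a m * b m) m) \<le> K * (real m + 1) powr (e - (real 0 + (\<alpha> + \<beta>)))"
    proof (intro exI allI)
      fix m
      have "norm ((fwd_diff ^^ 0) (\<lambda>m. a m * b m) m) = norm (a m) * norm (b m)" by (simp add: norm_mult)
      also have "\<dots> \<le> (K1 * (real m + 1) powr (e/2 - \<alpha>)) * (K2 * (real m + 1) powr (e/2 - \<beta>))"
        using K1[rule_format, of m] K2[rule_format, of m] K10
        by (intro mult_mono) auto
      also have "\<dots> = (K1 * K2) * ((real m + 1) powr (e/2 - \<alpha>) * (real m + 1) powr (e/2 - \<beta>))"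
        by (simp add: algebra_simps)
      also have "(real m + 1) powr (e/2 - \<alpha>) * (real m + 1) powr (e/2 - \<beta>) = (real m + 1) powr (e - (real 0 + (\<alpha> + \<beta>)))"
        by (subst powr_add[symmetric]) (simp add: algebra_simps)
      finally show "norm ((fwd_diff ^^ 0) (\<lambda>m. a m * b m) m) \<le> (K1 * K2) * (real m + 1) powr (e - (real 0 + (\<alpha> + \<beta>)))" .
    qed
  qed
next
  case (Suc j)
  show ?case
  proof (intro allI impI)
    fix a b :: "nat \<Rightarrow> complex" and \<alpha> \<beta> e :: real
    assume A: "Cls \<alpha> a" "Cls \<beta> b" "e > 0"
    have eq: "fwd_diff (\<lambda>m. a m * b m) = (\<lambda>m. fwd_diff a m * b m + a (Suc m) * fwd_diff b m)"
      by (auto simp: fwd_diff_def fun_eq_iff algebra_simps)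
    obtain K1 where K1: "\<forall>m. norm ((fwd_diff ^^ j) (\<lambda>m. fwd_diff a m * b m) m) \<le> K1 * (real m + 1) powr (e - (real j + ((\<alpha> + 1) + \<beta>)))"
      using Suc.IH C_diff[OF A(1)] A(2,3) by blast
    obtain K2 where K2: "\<forall>m. norm ((fwd_diff ^^ j) (\<lambda>m. a (Suc m) * fwd_diff b m) m) \<le> K2 * (real m + 1) powr (e - (real j + (\<alpha> + (\<beta> + 1))))"
      using Suc.IH C_shift[OF A(1)] C_diff[OF A(2)] A(3) by blast
    show "\<exists>K. \<forall>m. norm ((fwd_diff ^^ Suc j) (\<lambda>m. a m * b m) m) \<le> K * (real m + 1) powr (e - (real (Suc j) + (\<alpha> + \<beta>)))"
    proof (intro exI allI)
      fix m
      have ex: "e - (real j + ((\<alpha> + 1) + \<beta>)) = e - (real (Suc j) + (\<alpha> + \<beta>))"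
        "e - (real j + (\<alpha> + (\<beta> + 1))) = e - (real (Suc j) + (\<alpha> + \<beta>))" by simp_all
      show "norm ((fwd_diff ^^ Suc j) (\<lambda>m. a m * b m) m) \<le> (K1 + K2) * (real m + 1) powr (e - (real (Suc j) + (\<alpha> + \<beta>)))"
        unfolding fd_Suc eq fd_add using K1[rule_format, of m] K2[rule_format, of m] unfolding ex
        by (smt (verit) norm_triangle_ineq distrib_right)
    qed
  qed
qed

lemma C_mult: assumes "Cls \<alpha> a" "Cls \<beta> b" shows "Cls (\<alpha> + \<beta>) (\<lambda>m. a m * b m)"
  using mult_aux assms by (intro ClsI) blast

definition Pinv :: "nat \<Rightarrow> nat \<Rightarrow> real" where
  "Pinv j m = (\<Prod>i\<le>j. real m + 1 + real i)"

lemma Pinv_pos: "Pinv j m > 0"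
  unfolding Pinv_def by (intro prod_pos) auto

lemma Pinv_ge: "(real m + 1) ^ Suc j \<le> Pinv j m"
proof -
  have "(real m + 1) ^ Suc j = (\<Prod>i\<le>j. real m + 1)" by simp
  also have "\<dots> \<le> Pinv j m" unfolding Pinv_def by (intro prod_mono) auto
  finally show ?thesis .
qed

lemma alg_id:
  fixes F Q M J :: real assumes "Q > 0" "M \<ge> 0" "J \<ge> 0"
  shows "F / ((M + 1) * Q / (M + 2 + J)) - F / Q = ((J + 1) * F) / ((M + 1) * Q)"
proof -
  have d: "(M+1)*Q \<noteq> 0" "M+2+J \<noteq> 0" using assms by auto
  have 1: "F / ((M + 1) * Q / (M + 2 + J)) = F*(M+2+J)/((M+1)*Q)" using d by simp
  have 2: "F/Q = F*(M+1)/((M+1)*Q)" using d by simp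
  show ?thesis unfolding 1 2 diff_divide_distrib[symmetric] by (simp add: algebra_simps)
qed

lemma fd_inv: "(fwd_diff ^^ j) (\<lambda>m. 1 / (of_nat m + 1 :: complex)) = (\<lambda>m. of_real (fact j / Pinv j m))"
proof (induction j)
  case 0
  show ?case by (auto simp: Pinv_def fun_eq_iff)
next
  case (Suc j)
  show ?case
  proof (rule ext)
    fix m
    have h1: "Pinv (Suc j) m = Pinv j m * (real m + 2 + real j)"
      unfolding Pinv_def by (simp add: algebra_simps)
    have h2: "Pinv (Suc j) m = (real m + 1) * Pinv j (Suc m)"
      unfolding Pinv_def by (subst prod.atMost_Suc_shift) (simp add: algebra_simps)
    have p: "Pinv j m > 0" "Pinv j (Suc m) > 0" "Pinv (Suc j) m > 0" by (rule Pinv_pos)+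
    have "fact j / Pinv j m - fact j / Pinv j (Suc m) = fact (Suc j) / Pinv (Suc j) m"
    proof -
      have e1: "Pinv j m = (real m + 1) * Pinv j (Suc m) / (real m + 2 + real j)"
        using h1 h2 by (simp add: field_simps)
      have fs: "fact (Suc j) = (real j + 1) * (fact j :: real)" by (simp add: algebra_simps)
      show ?thesis unfolding e1 h2 fs by (rule alg_id) (use p in auto)
    qed
    moreover have "(fwd_diff ^^ Suc j) (\<lambda>m. 1 / (of_nat m + 1 :: complex)) m = of_real (fact j / Pinv j m) - of_real (fact j / Pinv j (Suc m))"
      by (simp only: funpow.simps o_apply Suc.IH fwd_diff_def)
    ultimately show "(fwd_diff ^^ Suc j) (\<lambda>m. 1 / (of_nat m + 1 :: complex)) m = of_real (fact (Suc j) / Pinv (Suc j) m)"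
      by (simp only: of_real_diff[symmetric])
  qed
qed

lemma C_inv: "Cls 1 (\<lambda>m. 1 / (of_nat m + 1 :: complex))"
proof (rule ClsI)
  fix j :: nat and e :: real assume e: "e > 0"
  show "\<exists>K. \<forall>m. norm ((fwd_diff ^^ j) (\<lambda>m. 1 / (of_nat m + 1 :: complex)) m) \<le> K * (real m + 1) powr (e - (real j + 1))"
  proof (intro exI allI)
    fix m
    have "norm ((fwd_diff ^^ j) (\<lambda>m. 1 / (of_nat m + 1 :: complex)) m) = fact j / Pinv j m"
      unfolding fd_inv norm_of_real using Pinv_pos[of j m] by simp
    also have "\<dots> \<le> fact j / (real m + 1) ^ Suc j"
      by (intro divide_left_mono Pinv_ge mult_pos_pos Pinv_pos) auto
    also have "\<dots> = fact j * (real m + 1) powr (- (real j + 1))"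
    proof -
      have x: "(real m + 1) powr (real (Suc j)) = (real m+1)^Suc j" by (rule powr_realpow) simp
      have "(real m + 1) powr (- (real j + 1)) = inverse ((real m+1)^Suc j)"
        unfolding powr_minus x[symmetric] by (simp add: add.commute)
      then show ?thesis by (simp add: divide_inverse)
    qed
    also have "\<dots> \<le> fact j * (real m + 1) powr (e - (real j + 1))"
      using e by (intro mult_left_mono powr_mono) auto
    finally show "norm ((fwd_diff ^^ j) (\<lambda>m. 1 / (of_nat m + 1 :: complex)) m) \<le> fact j * (real m + 1) powr (e - (real j + 1))" .
  qed
qed

lemma C_geom: assumes "norm s < 1 \<or> s = 1" shows "Cls 0 (\<lambda>m. s ^ m)"
proof (rule ClsI)
  fix j :: nat and e :: real assume e: "e > 0"
  show "\<exists>K. \<forall>m. norm ((fwd_diff ^^ j) (\<lambda>m. s ^ m) m) \<le> K * (real m + 1) powr (e - (real j + 0))"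
  proof (cases "s = 1")
    case True
    show ?thesis
    proof (intro exI allI)
      fix m
      show "norm ((fwd_diff ^^ j) (\<lambda>m. s ^ m) m) \<le> 1 * (real m + 1) powr (e - (real j + 0))"
        unfolding fd_geom
      proof (cases j)
        case 0
        then show "norm ((1 - s) ^ j * s ^ m) \<le> 1 * (real m + 1) powr (e - (real j + 0))"
          using True e by (simp add: ge_one_powr_ge_zero)
      qed (simp add: True)
    qed
  next
    case False
    then have r: "norm s < 1" using assms by auto
    obtain B where B: "\<forall>m. norm s ^ m * (real m + 1) powr (real j - e) \<le> B"
      using geom_bound[of "norm s" "real j - e"] r by auto
    show ?thesis
    proof (intro exI allI)
      fix m
      have pp: "(real m + 1) powr (real j - e) * (real m + 1) powr (e - (real j + 0)) = 1"
        by (simp add: powr_add[symmetric])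
      have "norm ((fwd_diff ^^ j) (\<lambda>m. s ^ m) m) = norm (1 - s) ^ j * norm s ^ m"
        by (simp add: fd_geom norm_mult norm_power)
      also have "\<dots> = norm (1 - s) ^ j * ((norm s ^ m * (real m + 1) powr (real j - e)) * (real m + 1) powr (e - (real j + 0)))"
        using pp by (simp add: mult.assoc)
      also have "\<dots> \<le> norm (1 - s) ^ j * (B * (real m + 1) powr (e - (real j + 0)))"
        using B by (intro mult_left_mono mult_right_mono) auto
      finally show "norm ((fwd_diff ^^ j) (\<lambda>m. s ^ m) m) \<le> (norm (1 - s) ^ j * B) * (real m + 1) powr (e - (real j + 0))"
        by (simp add: mult.assoc)
    qed
  qed
qed

definition conv :: "complex \<Rightarrow> (nat \<Rightarrow> complex) \<Rightarrow> nat \<Rightarrow> complex" where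
  "conv s h m = (\<Sum>k\<le>m. s^(m-k) * h k)"

lemma conv_Suc: "conv s h (Suc m) = s^(Suc m) * h 0 + (\<Sum>k\<le>m. s^(m-k) * h (Suc k))"
  unfolding conv_def by (subst sum.atMost_Suc_shift) simp

lemma fd_conv: "fwd_diff (conv s h) = (\<lambda>m. conv s (fwd_diff h) m + (- (h 0 * s)) * s^m)"
proof (rule ext)
  fix m
  have "conv s (fwd_diff h) m = conv s h m - (\<Sum>k\<le>m. s^(m-k) * h (Suc k))"
    unfolding conv_def fwd_diff_def by (simp add: algebra_simps sum_subtractf)
  then show "fwd_diff (conv s h) m = conv s (fwd_diff h) m + (- (h 0 * s)) * s^m"
    unfolding fwd_diff_def[of "conv s h"] conv_Suc by (simp add: algebra_simps)
qed

lemma fdj_conv: "\<forall>h. \<exists>c. (fwd_diff ^^ j) (conv s h) = (\<lambda>m. conv s ((fwd_diff ^^ j) h) m + c * s^m)"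
proof (induction j)
  case 0
  show ?case by (auto intro: exI[of _ 0])
next
  case (Suc j)
  show ?case
  proof
    fix h
    obtain c where c: "(fwd_diff ^^ j) (conv s (fwd_diff h)) = (\<lambda>m. conv s ((fwd_diff ^^ j) (fwd_diff h)) m + c * s^m)"
      using Suc.IH by blast
    have "(fwd_diff ^^ Suc j) (conv s h) = (fwd_diff ^^ j) (\<lambda>m. conv s (fwd_diff h) m + (- (h 0 * s)) * s^m)"
      unfolding fd_Suc fd_conv ..
    also have "\<dots> = (\<lambda>m. conv s ((fwd_diff ^^ Suc j) h) m + (c + (- (h 0 * s)) * (1 - s)^j) * s^m)"
      unfolding fd_add fd_cmul fd_geom c fd_Suc by (simp add: algebra_simps)
    finally show "\<exists>c. (fwd_diff ^^ Suc j) (conv s h) = (\<lambda>m. conv s ((fwd_diff ^^ Suc j) h) m + c * s^m)"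
      by blast
  qed
qed

lemma pow_split:
  fixes k m :: nat and g :: real assumes "k \<le> m"
  shows "(real k + 1) powr g \<le> (real m + 1) powr g * (real (m - k) + 1) powr \<bar>g\<bar>"
proof (cases "g \<ge> 0")
  case True
  have "(real k + 1) powr g \<le> (real m + 1) powr g" using assms True by (intro powr_mono2) auto
  also have "\<dots> \<le> (real m + 1) powr g * (real (m - k) + 1) powr \<bar>g\<bar>"
    using mult_left_mono[of 1 "(real (m - k) + 1) powr \<bar>g\<bar>" "(real m + 1) powr g"]
    by (simp add: ge_one_powr_ge_zero)
  finally show ?thesis .
next
  case False
  have le: "real m + 1 \<le> (real k + 1) * (real (m - k) + 1)"
    using assms by (simp add: of_nat_diff algebra_simps mult_left_mono)
  have "(real m + 1) powr (-g) \<le> ((real k + 1) * (real (m - k) + 1)) powr (-g)"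
    using False le by (intro powr_mono2) auto
  also have "\<dots> = (real k + 1) powr (-g) * (real (m - k) + 1) powr (-g)" by (rule powr_mult)
  finally have *: "(real m + 1) powr (-g) \<le> (real k + 1) powr (-g) * (real (m - k) + 1) powr (-g)" .
  have "(real k + 1) powr g = (real k + 1) powr g * (real m + 1) powr (-g) * (real m + 1) powr g"
    by (simp add: powr_minus)
  also have "\<dots> \<le> (real k + 1) powr g * ((real k + 1) powr (-g) * (real (m - k) + 1) powr (-g)) * (real m + 1) powr g"
    by (intro mult_right_mono mult_left_mono *) auto
  also have "\<dots> = (real m + 1) powr g * (real (m - k) + 1) powr \<bar>g\<bar>"
    using False by (simp add: powr_minus)
  finally show ?thesis .
qed

lemma conv_bound:
  assumes s: "norm s < 1" and K: "\<forall>k. norm (f k) \<le> K * (real k + 1) powr g"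
  shows "\<exists>K'. \<forall>m. norm (conv s f m) \<le> K' * (real m + 1) powr g"
proof -
  define r where "r = norm s"
  have r: "0 \<le> r" "r < 1" using s by (auto simp: r_def)
  have K0: "K \<ge> 0" using K_nonneg[OF K] .
  define S where "S = (\<Sum>d. r^d * (real d + 1) powr \<bar>g\<bar>)"
  have sm: "summable (\<lambda>d. r^d * (real d + 1) powr \<bar>g\<bar>)" using r by (intro summable_aux) auto
  show ?thesis
  proof (intro exI allI)
    fix m
    have "norm (conv s f m) \<le> (\<Sum>k\<le>m. r^(m-k) * (K * (real k + 1) powr g))"
      unfolding conv_def r_def
      by (rule order_trans[OF norm_sum], intro sum_mono)
         (use K in \<open>auto simp: norm_mult norm_power intro!: mult_left_mono\<close>)
    also have "\<dots> \<le> (\<Sum>k\<le>m. r^(m-k) * (K * ((real m + 1) powr g * (real (m - k) + 1) powr \<bar>g\<bar>)))"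
      using r K0 by (intro sum_mono mult_left_mono pow_split) auto
    also have "\<dots> = K * (real m + 1) powr g * (\<Sum>k\<le>m. r^(m-k) * (real (m - k) + 1) powr \<bar>g\<bar>)"
      by (simp add: sum_distrib_left algebra_simps)
    also have "(\<Sum>k\<le>m. r^(m-k) * (real (m - k) + 1) powr \<bar>g\<bar>) = (\<Sum>d\<le>m. r^d * (real d + 1) powr \<bar>g\<bar>)"
      by (rule sum.reindex_bij_witness[of _ "\<lambda>k. m - k" "\<lambda>k. m - k"]) auto
    finally have 1: "norm (conv s f m) \<le> K * (real m + 1) powr g * (\<Sum>d\<le>m. r^d * (real d + 1) powr \<bar>g\<bar>)" .
    have "(\<Sum>d\<le>m. r^d * (real d + 1) powr \<bar>g\<bar>) \<le> S" unfolding S_def using r by (intro sum_le_suminf sm) auto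
    then have "K * (real m + 1) powr g * (\<Sum>d\<le>m. r^d * (real d + 1) powr \<bar>g\<bar>) \<le> K * (real m + 1) powr g * S"
      using K0 by (intro mult_left_mono) auto
    with 1 show "norm (conv s f m) \<le> (K * S) * (real m + 1) powr g"
      by (simp add: algebra_simps)
  qed
qed

lemma C_conv: assumes s: "norm s < 1" and h: "Cls \<alpha> h" shows "Cls \<alpha> (conv s h)"
proof (rule ClsI)
  fix j :: nat and e :: real assume e: "e > 0"
  define g where "g = e - (real j + \<alpha>)"
  obtain c where c: "(fwd_diff ^^ j) (conv s h) = (\<lambda>m. conv s ((fwd_diff ^^ j) h) m + c * s^m)"
    using fdj_conv by blast
  obtain K where K: "\<forall>m. norm ((fwd_diff ^^ j) h m) \<le> K * (real m + 1) powr g"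
    using ClsD[OF h e] unfolding g_def by blast
  obtain K' where K': "\<forall>m. norm (conv s ((fwd_diff ^^ j) h) m) \<le> K' * (real m + 1) powr g"
    using conv_bound[OF s K] by blast
  obtain B where B: "\<forall>m. norm s ^ m * (real m + 1) powr (-g) \<le> B"
    using geom_bound[of "norm s" "-g"] s by auto
  show "\<exists>K. \<forall>m. norm ((fwd_diff ^^ j) (conv s h) m) \<le> K * (real m + 1) powr (e - (real j + \<alpha>))"
    unfolding g_def[symmetric]
  proof (intro exI allI)
    fix m
    have pp: "(real m + 1) powr (-g) * (real m + 1) powr g = 1"
      by (simp add: powr_add[symmetric])
    have "norm (c * s^m) = norm c * ((norm s ^ m * (real m + 1) powr (-g)) * (real m + 1) powr g)"
      using pp by (simp add: norm_mult norm_power mult.assoc)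
    also have "\<dots> \<le> norm c * (B * (real m + 1) powr g)"
      using B by (intro mult_left_mono mult_right_mono) auto
    finally have 2: "norm (c * s^m) \<le> (norm c * B) * (real m + 1) powr g" by (simp add: mult.assoc)
    show "norm ((fwd_diff ^^ j) (conv s h) m) \<le> (K' + norm c * B) * (real m + 1) powr g"
      unfolding c using K'[rule_format, of m] 2
      by (smt (verit) norm_triangle_ineq distrib_right)
  qed
qed

lemma harm_bound: "(\<Sum>k\<le>m. 1 / (real k + 1)) \<le> 1 + ln (real m + 1)"
proof (induction m)
  case 0
  then show ?case by simp
next
  case (Suc m)
  have "ln ((real m + 1) / (real m + 2)) \<le> (real m + 1) / (real m + 2) - 1"
    by (intro ln_le_minus_one) auto
  also have "\<dots> = - (1 / (real m + 2))" by (simp add: field_simps)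
  finally have "1 / (real m + 2) \<le> ln (real m + 2) - ln (real m + 1)"
    by (simp add: ln_div)
  with Suc show ?case by (simp add: add.commute add.left_commute)
qed

lemma psum_aux:
  assumes K: "\<forall>k. norm (h k) \<le> K * (real k + 1) powr (e/2 - 1)" and e: "e > 0"
  shows "norm (\<Sum>k\<le>m. h k) \<le> (K * (1 + 2 / e)) * (real m + 1) powr e"
proof -
  have K0: "K \<ge> 0" using K_nonneg[OF K] .
  have "norm (\<Sum>k\<le>m. h k) \<le> (\<Sum>k\<le>m. K * (real k + 1) powr (e/2 - 1))"
    by (rule order_trans[OF norm_sum], intro sum_mono) (use K in auto)
  also have "\<dots> \<le> (\<Sum>k\<le>m. K * ((real m + 1) powr (e/2) * (1 / (real k + 1))))"
  proof (intro sum_mono mult_left_mono K0)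
    fix k assume k: "k \<in> {..m}"
    have "(real k + 1) powr (e/2 - 1) = (real k + 1) powr (e/2) * (1 / (real k + 1))"
      by (simp add: powr_diff)
    also have "\<dots> \<le> (real m + 1) powr (e/2) * (1 / (real k + 1))"
      using k e by (intro mult_right_mono powr_mono2) auto
    finally show "(real k + 1) powr (e/2 - 1) \<le> (real m + 1) powr (e/2) * (1 / (real k + 1))" .
  qed
  also have "\<dots> = K * (real m + 1) powr (e/2) * (\<Sum>k\<le>m. 1 / (real k + 1))"
    by (simp add: sum_distrib_left mult.assoc)
  also have "\<dots> \<le> K * (real m + 1) powr (e/2) * (1 + ln (real m + 1))"
    using K0 by (intro mult_left_mono harm_bound) auto
  also have "\<dots> \<le> K * (real m + 1) powr (e/2) * (1 + (real m + 1) powr (e/2) / (e/2))"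
    using K0 e by (intro mult_left_mono add_left_mono ln_powr_bound) auto
  also have "\<dots> = K * ((real m + 1) powr (e/2) + (2/e) * ((real m + 1) powr (e/2) * (real m + 1) powr (e/2)))"
    by (simp add: algebra_simps)
  also have "(real m + 1) powr (e/2) * (real m + 1) powr (e/2) = (real m + 1) powr e"
    by (simp add: powr_add[symmetric])
  also have "K * ((real m + 1) powr (e/2) + (2/e) * (real m + 1) powr e) \<le> K * ((real m + 1) powr e + (2/e) * (real m + 1) powr e)"
    using K0 e by (intro mult_left_mono add_right_mono powr_mono) auto
  also have "\<dots> = (K * (1 + 2 / e)) * (real m + 1) powr e" by (simp add: algebra_simps)
  finally show ?thesis .
qed

lemma C_psum: assumes h: "Cls 1 h" shows "Cls 0 (\<lambda>m. \<Sum>k\<le>m. h k)"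
proof (rule ClsI)
  fix j :: nat and e :: real assume e: "e > 0"
  show "\<exists>K. \<forall>m. norm ((fwd_diff ^^ j) (\<lambda>m. \<Sum>k\<le>m. h k) m) \<le> K * (real m + 1) powr (e - (real j + 0))"
  proof (cases j)
    case 0
    have half: "e/2 > 0" using e by simp
    obtain K where K: "\<forall>m. norm (h m) \<le> K * (real m + 1) powr (e/2 - 1)"
      using ClsD[OF h half, where j=0] by auto
    show ?thesis using psum_aux[OF K e] 0 by auto
  next
    case (Suc i)
    have eq: "fwd_diff (\<lambda>m. \<Sum>k\<le>m. h k) = (\<lambda>m. (-1) * h (Suc m))"
      by (auto simp: fwd_diff_def fun_eq_iff)
    have c: "Cls 1 (\<lambda>m. (-1) * h (Suc m))" by (intro C_cmul C_shift h)
    obtain K where K: "\<forall>m. norm ((fwd_diff ^^ i) (\<lambda>m. (-1) * h (Suc m)) m) \<le> K * (real m + 1) powr (e - (real i + 1))"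
      using ClsD[OF c e] by blast
    show ?thesis unfolding Suc fd_Suc eq using K by (auto simp: algebra_simps)
  qed
qed

definition ins :: "nat \<Rightarrow> (nat \<Rightarrow> nat) \<Rightarrow> nat \<Rightarrow> nat" where
  "ins m mm' = (\<lambda>i. if i = 0 then 0 else if i = 1 then m else mm' (i - 1))"

lemma S1: "sh_index_set 1 m = {\<lambda>i. if i = 1 then m else 0}"
  unfolding sh_index_set_def by (auto simp: fun_eq_iff)

lemma S_mem: "mm \<in> sh_index_set p m \<longleftrightarrow> mm 1 = m \<and> (\<forall>i\<in>{1..<p}. mm (Suc i) \<le> mm i) \<and> (\<forall>i. i \<notin> {1..p} \<longrightarrow> mm i = 0)"
  unfolding sh_index_set_def by simp

lemma S_Suc:
  assumes q: "q \<ge> 1"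
  shows "sh_index_set (Suc q) m = (\<lambda>(k, mm'). ins m mm') ` (SIGMA k:{..m}. sh_index_set q k)"
proof (intro equalityI subsetI)
  fix mm assume mm: "mm \<in> sh_index_set (Suc q) m"
  define mm' where "mm' = (\<lambda>i. if i = 0 then 0 else mm (Suc i))"
  have m1: "mm 1 = m" and mono: "\<forall>i\<in>{1..<Suc q}. mm (Suc i) \<le> mm i"
    and z: "\<forall>i. i \<notin> {1..Suc q} \<longrightarrow> mm i = 0" using mm by (auto simp: S_mem)
  have k: "mm 2 \<le> m" using mono q m1 by (auto simp: numeral_2_eq_2)
  have "mm' \<in> sh_index_set q (mm 2)"
    unfolding S_mem mm'_def using mono z by (auto simp: numeral_2_eq_2)
  moreover have "ins m mm' = mm"
    unfolding ins_def mm'_def using z m1 by (auto simp: fun_eq_iff)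
  ultimately show "mm \<in> (\<lambda>(k, mm'). ins m mm') ` (SIGMA k:{..m}. sh_index_set q k)"
    using k by (intro image_eqI[of _ _ "(mm 2, mm')"]) auto
next
  fix x assume "x \<in> (\<lambda>(k, mm'). ins m mm') ` (SIGMA k:{..m}. sh_index_set q k)"
  then obtain k mm' where k: "k \<le> m" and mm': "mm' \<in> sh_index_set q k" and x: "x = ins m mm'"
    by auto
  have a: "mm' 1 = k" and mono: "\<forall>i\<in>{1..<q}. mm' (Suc i) \<le> mm' i"
    and z: "\<forall>i. i \<notin> {1..q} \<longrightarrow> mm' i = 0" using mm' by (auto simp: S_mem)
  have "\<forall>i\<in>{1..<Suc q}. ins m mm' (Suc i) \<le> ins m mm' i"
  proof
    fix i assume i: "i \<in> {1..<Suc q}"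
    show "ins m mm' (Suc i) \<le> ins m mm' i"
    proof (cases "i = 1")
      case True then show ?thesis using a k by (simp add: ins_def)
    next
      case False
      then have i1: "i - 1 \<in> {1..<q}" and i2: "Suc (i - 1) = i" using i by auto
      have "mm' (Suc (i - 1)) \<le> mm' (i - 1)" using mono i1 by blast
      then show ?thesis using i2 False i by (simp add: ins_def)
    qed
  qed
  moreover have "\<forall>i. i \<notin> {1..Suc q} \<longrightarrow> ins m mm' i = 0"
  proof (intro allI impI)
    fix i assume "i \<notin> {1..Suc q}"
    then have "i = 0 \<or> (i - 1 \<notin> {1..q} \<and> i \<noteq> 1)" by auto
    then show "ins m mm' i = 0" using z by (auto simp: ins_def)
  qed
  ultimately show "x \<in> sh_index_set (Suc q) m" unfolding x S_mem by (simp add: ins_def)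
qed

lemma ins_inj:
  assumes q: "q \<ge> 1"
  shows "inj_on (\<lambda>(k, mm'). ins m mm') (SIGMA k:{..m}. sh_index_set q k)"
proof (rule inj_onI, clarsimp)
  fix k mm1 k' mm2
  assume A: "k \<le> m" "mm1 \<in> sh_index_set q k" "k' \<le> m" "mm2 \<in> sh_index_set q k'" "ins m mm1 = ins m mm2"
  have z: "mm1 0 = 0" "mm2 0 = 0" using A(2,4) by (auto simp: S_mem)
  have "mm1 i = mm2 i" for i
  proof (cases "i = 0")
    case True then show ?thesis using z by simp
  next
    case False
    have "ins m mm1 (Suc i) = ins m mm2 (Suc i)" using A(5) by simp
    then show ?thesis using False by (simp add: ins_def)
  qed
  then have e: "mm1 = mm2" by auto
  moreover have "k = mm1 1" "k' = mm2 1" using A(2,4) by (auto simp: S_mem)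
  ultimately show "k = k' \<and> mm1 = mm2" by simp
qed

lemma S_finite: "q \<ge> 1 \<Longrightarrow> finite (sh_index_set q k)"
proof (induction q arbitrary: k)
  case 0 then show ?case by simp
next
  case (Suc q)
  show ?case
  proof (cases "q = 0")
    case True then show ?thesis using S1[of k] by simp
  next
    case False
    then show ?thesis using Suc.IH by (subst S_Suc) auto
  qed
qed

lemma ssh_1: "ssh 1 s m = 1 / (of_nat m + 1) * (s 1 * s 1 ^ m)"
  unfolding ssh_def S1 by simp

lemma ssh_Suc:
  assumes q: "q \<ge> 1"
  shows "ssh (Suc q) s m = 1 / (of_nat m + 1) * conv (s 1) (ssh q (\<lambda>i. s (Suc i))) m"
proof -
  define T where "T = (\<lambda>mm. (\<Prod>i\<in>{1..<Suc q}. s i ^ (mm i - mm (Suc i))) * s (Suc q) ^ (mm (Suc q) + 1)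
        / (\<Prod>i\<in>{1..Suc q}. (of_nat (mm i + 1) :: complex)))"
  define T' where "T' = (\<lambda>mm. (\<Prod>i\<in>{1..<q}. s (Suc i) ^ (mm i - mm (Suc i))) * s (Suc q) ^ (mm q + 1)
        / (\<Prod>i\<in>{1..q}. (of_nat (mm i + 1) :: complex)))"
  have T: "T (ins m mm') = 1 / (of_nat m + 1) * (s 1 ^ (m - k) * T' mm')"
    if k: "k \<le> m" and mm': "mm' \<in> sh_index_set q k" for k mm'
  proof -
    have a: "mm' 1 = k" using mm' by (auto simp: S_mem)
    have p1: "(\<Prod>i\<in>{1..<Suc q}. s i ^ (ins m mm' i - ins m mm' (Suc i)))
        = s 1 ^ (m - k) * (\<Prod>i\<in>{1..<q}. s (Suc i) ^ (mm' i - mm' (Suc i)))"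
    proof -
      have "(\<Prod>i\<in>{1..<Suc q}. s i ^ (ins m mm' i - ins m mm' (Suc i)))
          = s 1 ^ (ins m mm' 1 - ins m mm' 2) * (\<Prod>i\<in>{Suc 1..<Suc q}. s i ^ (ins m mm' i - ins m mm' (Suc i)))"
        using q by (subst prod.atLeast_Suc_lessThan) (auto simp: numeral_2_eq_2)
      also have "(\<Prod>i\<in>{Suc 1..<Suc q}. s i ^ (ins m mm' i - ins m mm' (Suc i)))
          = (\<Prod>i\<in>{1..<q}. s (Suc i) ^ (ins m mm' (Suc i) - ins m mm' (Suc (Suc i))))"
        by (rule prod.shift_bounds_Suc_ivl)
      also have "\<dots> = (\<Prod>i\<in>{1..<q}. s (Suc i) ^ (mm' i - mm' (Suc i)))"
        by (intro prod.cong) (auto simp: ins_def)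
      finally show ?thesis using a by (simp add: ins_def numeral_2_eq_2)
    qed
    have p2: "ins m mm' (Suc q) = mm' q" using q by (auto simp: ins_def)
    have p3: "(\<Prod>i\<in>{1..Suc q}. (of_nat (ins m mm' i + 1) :: complex))
        = (of_nat m + 1) * (\<Prod>i\<in>{1..q}. (of_nat (mm' i + 1) :: complex))"
    proof -
      have "(\<Prod>i\<in>{1..Suc q}. (of_nat (ins m mm' i + 1) :: complex))
          = of_nat (ins m mm' 1 + 1) * (\<Prod>i\<in>{Suc 1..Suc q}. (of_nat (ins m mm' i + 1) :: complex))"
        by (subst prod.atLeast_Suc_atMost) auto
      also have "(\<Prod>i\<in>{Suc 1..Suc q}. (of_nat (ins m mm' i + 1) :: complex))
          = (\<Prod>i\<in>{1..q}. (of_nat (ins m mm' (Suc i) + 1) :: complex))"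
        by (rule prod.shift_bounds_cl_Suc_ivl)
      also have "\<dots> = (\<Prod>i\<in>{1..q}. (of_nat (mm' i + 1) :: complex))"
        by (intro prod.cong) (auto simp: ins_def)
      finally show ?thesis by (simp add: ins_def)
    qed
    show ?thesis unfolding T_def T'_def p1 p2 p3 by (simp add: field_simps)
  qed
  have "ssh (Suc q) s m = (\<Sum>mm\<in>sh_index_set (Suc q) m. T mm)"
    unfolding ssh_def T_def by simp
  also have "\<dots> = (\<Sum>x\<in>(SIGMA k:{..m}. sh_index_set q k). T ((\<lambda>(k, mm'). ins m mm') x))"
    unfolding S_Suc[OF q] by (rule sum.reindex[OF ins_inj[OF q], unfolded comp_def])
  also have "\<dots> = (\<Sum>k\<le>m. \<Sum>mm'\<in>sh_index_set q k. T (ins m mm'))"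
    by (subst sum.Sigma) (use q in \<open>auto intro: S_finite simp: case_prod_beta\<close>)
  also have "\<dots> = (\<Sum>k\<le>m. \<Sum>mm'\<in>sh_index_set q k. 1 / (of_nat m + 1) * (s 1 ^ (m - k) * T' mm'))"
    by (intro sum.cong refl T) auto
  also have "\<dots> = 1 / (of_nat m + 1) * conv (s 1) (ssh q (\<lambda>i. s (Suc i))) m"
    unfolding conv_def ssh_def T'_def by (simp add: sum_distrib_left)
  finally show ?thesis .
qed

lemma ssh_Cls:
  "p \<ge> 1 \<Longrightarrow> \<forall>i\<in>{1..p}. norm (s i) < 1 \<or> s i = 1 \<Longrightarrow> Cls 1 (ssh p s)"
proof (induction p arbitrary: s)
  case 0 then show ?case by simp
next
  case (Suc q)
  have s1: "norm (s 1) < 1 \<or> s 1 = 1" using Suc.prems by auto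
  show ?case
  proof (cases "q = 0")
    case True
    have "Cls (1 + 0) (\<lambda>m. 1 / (of_nat m + 1) * (s 1 * s 1 ^ m))"
      by (intro C_mult C_inv C_cmul C_geom s1)
    moreover have "ssh 1 s = (\<lambda>m. 1 / (of_nat m + 1) * (s 1 * s 1 ^ m))"
      by (rule ext, rule ssh_1)
    moreover have "Suc q = 1" using True by simp
    ultimately show ?thesis by (simp only: add_0_right)
  next
    case False
    then have q: "q \<ge> 1" by simp
    have IH: "Cls 1 (ssh q (\<lambda>i. s (Suc i)))"
      using Suc.prems(2) q by (intro Suc.IH) auto
    have c0: "Cls 0 (conv (s 1) (ssh q (\<lambda>i. s (Suc i))))"
    proof (cases "s 1 = 1")
      case True
      have "conv (s 1) (ssh q (\<lambda>i. s (Suc i))) = (\<lambda>m. \<Sum>k\<le>m. ssh q (\<lambda>i. s (Suc i)) k)"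
        using True by (simp add: conv_def[abs_def])
      then show ?thesis using C_psum[OF IH] by simp
    next
      case False
      then have "norm (s 1) < 1" using s1 by auto
      then show ?thesis by (intro C_mono[OF C_conv[OF _ IH]]) auto
    qed
    have "Cls (1 + 0) (\<lambda>m. 1 / (of_nat m + 1) * conv (s 1) (ssh q (\<lambda>i. s (Suc i))) m)"
      by (intro C_mult C_inv c0)
    then have "Cls 1 (\<lambda>m. 1 / (of_nat m + 1) * conv (s 1) (ssh q (\<lambda>i. s (Suc i))) m)" by simp
    moreover have eqs: "ssh (Suc q) s = (\<lambda>m. 1 / (of_nat m + 1) * conv (s 1) (ssh q (\<lambda>i. s (Suc i))) m)"
      by (rule ext, rule ssh_Suc[OF q])
    ultimately show ?thesis by (simp only: eqs)
  qed
qed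

lemma pow_m: assumes "m \<ge> 1" shows "(real m + 1) powr g \<le> max 1 (2 powr g) * real m powr g"
proof (cases "g \<ge> 0")
  case True
  have "(real m + 1) powr g \<le> (2 * real m) powr g"
    using True assms by (intro powr_mono2) auto
  also have "\<dots> = 2 powr g * real m powr g" by (rule powr_mult)
  also have "\<dots> \<le> max 1 (2 powr g) * real m powr g" by (intro mult_right_mono) auto
  finally show ?thesis .
next
  case False
  have "(real m + 1) powr g \<le> real m powr g"
    using False assms by (intro powr_mono2') auto
  also have "\<dots> \<le> max 1 (2 powr g) * real m powr g"
    using mult_right_mono[of 1 "max 1 (2 powr g)" "real m powr g"] by simp
  finally show ?thesis .
qed

theorem corollary3p4:
  fixes p l :: nat and s :: "nat \<Rightarrow> complex"
  assumes "p \<ge> 1"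
    and "\<forall>i\<in>{1..p}. norm (s i) < 1 \<or> s i = 1"
  shows "\<forall>eps>0. (\<lambda>m. norm ((fwd_diff ^^ l) (ssh p s) m))
           \<in> O[at_top](\<lambda>m. real m powr (- (real l + 1 - eps)))"
proof (intro allI impI)
  fix eps :: real assume e: "eps > 0"
  obtain K where K: "\<forall>m. norm ((fwd_diff ^^ l) (ssh p s) m) \<le> K * (real m + 1) powr (eps - (real l + 1))"
    using ClsD[OF ssh_Cls[OF assms] e] by blast
  have K0: "K \<ge> 0" using K_nonneg[OF K] .
  have ex: "eps - (real l + 1) = - (real l + 1 - eps)" by simp
  show "(\<lambda>m. norm ((fwd_diff ^^ l) (ssh p s) m)) \<in> O[at_top](\<lambda>m. real m powr (- (real l + 1 - eps)))"
  proof (rule bigoI)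
    show "\<forall>\<^sub>F m in at_top. norm (norm ((fwd_diff ^^ l) (ssh p s) m))
        \<le> (K * max 1 (2 powr (- (real l + 1 - eps)))) * norm (real m powr (- (real l + 1 - eps)))"
      using eventually_ge_at_top[of "1::nat"]
    proof eventually_elim
      case (elim m)
      have "norm (norm ((fwd_diff ^^ l) (ssh p s) m)) \<le> K * (real m + 1) powr (- (real l + 1 - eps))"
        using K[rule_format, of m] unfolding ex by simp
      also have "\<dots> \<le> K * (max 1 (2 powr (- (real l + 1 - eps))) * real m powr (- (real l + 1 - eps)))"
        using K0 elim by (intro mult_left_mono pow_m) auto
      finally show ?case by (simp add: mult.assoc)
    qed
  qed
qed

end
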